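(* Let $A,B\subset\mathbb{R}^n$ be set-germs at $0$ with $0\in\overline{A}\cap\overline{B}$, and let $h:(\mathbb{R}^n,0)\to(\mathbb{R}^n,0)$ be a bi-Lipschitz homeomorphism (germ). Suppose that $B$ satisfies condition $(SSP)$. If $D(A)\subset D(B)$, then $D(h(A))\subset D(h(B))$.
   Context: A bi-Lipschitz homeomorphism germ is a homeomorphism between neighbourhoods of $0$ fixing $0$ with $K_1|x-y|\le|h(x)-h(y)|\le K_2|x-y|$ for some $0<K_1\le K_2$ near $0$. Direction set: $D(A)=\{a\in S^{n-1} : \exists\, \{x_i\}\subset A\setminus\{0\},\ x_i\to 0,\ x_i/\|x_i\|\to a\}$. A set-germ $B$ with $0\in\overline{B}$ satisfies condition $(SSP)$ if for every sequence $\{a_m\}\subset\mathbb{R}^n$ with $a_m\to0$ and $\lim a_m/\|a_m\|\in D(B)$ there is a sequence $\{b_m\}\subset B$ with $\|a_m-b_m\|/\|a_m\|\to0$ and $\|a_m-b_m\|/\|b_m\|\to0$. *)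

theory Defs
  imports "HOL-Analysis.Analysis"
begin

definition direction_set :: "'a::euclidean_space set \<Rightarrow> 'a set" where
  "direction_set A = {a \<in> sphere 0 1. \<exists>x::nat \<Rightarrow> 'a.
      (\<forall>i. x i \<in> A - {0}) \<and> x \<longlonglongrightarrow> 0 \<and>
      (\<lambda>i. x i /\<^sub>R norm (x i)) \<longlonglongrightarrow> a}"

text \<open>Condition (SSP) for a set-germ B at 0 (sequences a_m are taken nonzero,
  as required for a_m/|a_m| to make sense).\<close>
definition SSP :: "'a::euclidean_space set \<Rightarrow> bool" where
  "SSP B \<longleftrightarrow> (\<forall>a::nat \<Rightarrow> 'a. \<forall>d.
      (\<forall>m. a m \<noteq> 0) \<and> a \<longlonglongrightarrow> 0 \<and>
      (\<lambda>m. a m /\<^sub>R norm (a m)) \<longlonglongrightarrow> d \<and> d \<in> direction_set B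
      \<longrightarrow> (\<exists>b::nat \<Rightarrow> 'a. (\<forall>m. b m \<in> B) \<and>
             (\<lambda>m. norm (a m - b m) / norm (a m)) \<longlonglongrightarrow> 0 \<and>
             (\<lambda>m. norm (a m - b m) / norm (b m)) \<longlonglongrightarrow> 0))"

text \<open>A bi-Lipschitz homeomorphism germ at 0, represented on an open
  neighbourhood U of 0 mapped homeomorphically onto an open neighbourhood of 0.\<close>
definition bilipschitz_homeo_germ :: "'a::euclidean_space set \<Rightarrow> ('a \<Rightarrow> 'a) \<Rightarrow> bool" where
  "bilipschitz_homeo_germ U h \<longleftrightarrow>
     open U \<and> 0 \<in> U \<and> h 0 = 0 \<and>
     (\<exists>V g. open V \<and> homeomorphism U V h g) \<and>
     (\<exists>K1 K2. 0 < K1 \<and> K1 \<le> K2 \<and>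
        (\<forall>x\<in>U. \<forall>y\<in>U. K1 * norm (x - y) \<le> norm (h x - h y) \<and>
                        norm (h x - h y) \<le> K2 * norm (x - y)))"

end

theory Submission
  imports Defs
begin

lemma dir_diff:
  fixes u v :: "'a::real_normed_vector"
  assumes "u \<noteq> 0" "v \<noteq> 0"
  shows "norm (u /\<^sub>R norm u - v /\<^sub>R norm v) \<le> 2 * (norm (u - v) / norm u)"
proof -
  have nu: "norm u > 0" "norm v > 0" using assms by auto
  have eq: "u /\<^sub>R norm u - v /\<^sub>R norm v = (u - v) /\<^sub>R norm u + (inverse (norm u) - inverse (norm v)) *\<^sub>R v"
    using nu by (simp add: algebra_simps)
  have "norm ((inverse (norm u) - inverse (norm v)) *\<^sub>R v) = \<bar>inverse (norm u) - inverse (norm v)\<bar> * norm v" by simp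
  also have "\<dots> = \<bar>norm v - norm u\<bar> / norm u"
    using nu by (simp add: field_simps abs_mult[symmetric] abs_divide)
  also have "\<dots> \<le> norm (u - v) / norm u"
    using nu norm_triangle_ineq3[of v u] by (simp add: divide_right_mono norm_minus_commute)
  finally have b: "norm ((inverse (norm u) - inverse (norm v)) *\<^sub>R v) \<le> norm (u - v) / norm u" .
  have "norm (u /\<^sub>R norm u - v /\<^sub>R norm v) \<le> norm ((u - v) /\<^sub>R norm u) + norm ((inverse (norm u) - inverse (norm v)) *\<^sub>R v)"
    unfolding eq by (rule norm_triangle_ineq)
  also have "norm ((u - v) /\<^sub>R norm u) = norm (u - v) / norm u" using nu by (simp add: divide_inverse_commute)
  finally show ?thesis using b by linarith
qed

theorem proposition5p8:
  fixes A B U :: "'a::euclidean_space set" and h :: "'a \<Rightarrow> 'a"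
  assumes "0 \<in> closure A" and "0 \<in> closure B"
    and "bilipschitz_homeo_germ U h"
    and "SSP B"
    and "direction_set A \<subseteq> direction_set B"
  shows "direction_set (h ` (A \<inter> U)) \<subseteq> direction_set (h ` (B \<inter> U))"
proof
  fix d assume dA: "d \<in> direction_set (h ` (A \<inter> U))"
  from dA[unfolded direction_set_def] obtain y where dS: "d \<in> sphere 0 1" and yA: "\<forall>i. y i \<in> h ` (A \<inter> U) - {0}"
    and y0: "y \<longlonglongrightarrow> 0" and yd: "(\<lambda>i. y i /\<^sub>R norm (y i)) \<longlonglongrightarrow> d"
    by blast
  from assms(3)[unfolded bilipschitz_homeo_germ_def] have oU: "open U" and U0: "0 \<in> U" and h0: "h 0 = 0"
    by blast+
  from assms(3)[unfolded bilipschitz_homeo_germ_def] obtain K1 K2 where K: "0 < K1" "K1 \<le> K2"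
    and L: "\<And>x y. x \<in> U \<Longrightarrow> y \<in> U \<Longrightarrow> K1 * norm (x - y) \<le> norm (h x - h y) \<and>
                        norm (h x - h y) \<le> K2 * norm (x - y)"
    by blast
  have L0: "K1 * norm x \<le> norm (h x) \<and> norm (h x) \<le> K2 * norm x" if "x \<in> U" for x
    using L[OF that U0] h0 by simp
  have "\<exists>x. x \<in> A \<inter> U \<and> h x = y i" for i
  proof -
    have "y i \<in> h ` (A \<inter> U)" using yA by simp
    then obtain x where "x \<in> A \<inter> U" "y i = h x" by (rule imageE)
    then show ?thesis by metis
  qed
  then have "\<forall>i. \<exists>x. x \<in> A \<inter> U \<and> h x = y i" by (rule allI)
  from choice[OF this] obtain x where x: "\<forall>i. x i \<in> A \<inter> U \<and> h (x i) = y i" by (elim exE)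
  have xA: "x i \<in> A \<inter> U" and hx: "h (x i) = y i" for i using x by simp_all
  have y_nz: "y i \<noteq> 0" for i using yA[rule_format, of i] by simp
  have x_nz: "x i \<noteq> 0" for i
  proof
    assume "x i = 0"
    then have "y i = 0" using hx[of i] h0 by simp
    with y_nz show False by blast
  qed
  have x0: "x \<longlonglongrightarrow> 0"
  proof (rule Lim_null_comparison)
    show "\<forall>\<^sub>F i in sequentially. norm (x i) \<le> norm (y i) / K1"
    proof (rule always_eventually, rule allI)
      fix i
      have "K1 * norm (x i) \<le> norm (y i)" using L0[of "x i"] xA[of i] hx[of i] by auto
      then show "norm (x i) \<le> norm (y i) / K1" using K(1) by (simp add: pos_le_divide_eq mult.commute)
    qed
    show "(\<lambda>i. norm (y i) / K1) \<longlonglongrightarrow> 0"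
      using tendsto_divide[OF tendsto_norm[OF y0] tendsto_const[of K1]] K(1) by simp
  qed
  have "seq_compact (sphere (0::'a) 1)" by (rule compact_imp_seq_compact) simp
  moreover have "\<forall>i. x i /\<^sub>R norm (x i) \<in> sphere 0 1" using x_nz by simp
  ultimately obtain a r where aS: "a \<in> sphere 0 1" and r: "strict_mono (r::nat\<Rightarrow>nat)"
    and xa: "((\<lambda>i. x i /\<^sub>R norm (x i)) \<circ> r) \<longlonglongrightarrow> a"
    by (rule seq_compactE)
  define X where "X = x \<circ> r"
  define Y where "Y = y \<circ> r"
  have X0: "X \<longlonglongrightarrow> 0" unfolding X_def using LIMSEQ_subseq_LIMSEQ[OF x0 r] .
  have Xa: "(\<lambda>i. X i /\<^sub>R norm (X i)) \<longlonglongrightarrow> a" using xa by (simp add: X_def o_def)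
  have Yd: "(\<lambda>i. Y i /\<^sub>R norm (Y i)) \<longlonglongrightarrow> d"
    using LIMSEQ_subseq_LIMSEQ[OF yd r] by (simp add: Y_def o_def)
  have X_nz: "X i \<noteq> 0" for i using x_nz by (simp add: X_def)
  have XU: "X i \<in> U" for i using xA by (simp add: X_def)
  have hX: "h (X i) = Y i" for i using hx by (simp add: X_def Y_def)
  have "a \<in> direction_set A"
    unfolding direction_set_def using aS X0 Xa X_nz xA
    by (auto simp: X_def intro!: exI[of _ X])
  with assms(5) have aB: "a \<in> direction_set B" by blast
  from assms(4)[unfolded SSP_def, rule_format, of X a] X_nz X0 Xa aB
  obtain b where bB: "\<And>m. b m \<in> B"
    and r1: "(\<lambda>m. norm (X m - b m) / norm (X m)) \<longlonglongrightarrow> 0" by blast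
  have "\<forall>\<^sub>F m in sequentially. norm (X m - b m) / norm (X m) < 1"
    using order_tendstoD(2)[OF r1, of 1] by simp
  then have ev1: "\<forall>\<^sub>F m in sequentially. b m \<noteq> 0"
    by eventually_elim (use X_nz in auto)
  have "(\<lambda>m. norm (X m - b m)) = (\<lambda>m. norm (X m - b m) / norm (X m) * norm (X m))"
    using X_nz by auto
  moreover have "(\<lambda>m. norm (X m - b m) / norm (X m) * norm (X m)) \<longlonglongrightarrow> 0"
    using tendsto_mult[OF r1 tendsto_norm[OF X0]] by simp
  ultimately have "(\<lambda>m. norm (X m - b m)) \<longlonglongrightarrow> 0" by simp
  then have "(\<lambda>m. X m - b m) \<longlonglongrightarrow> 0" by (rule tendsto_norm_zero_cancel)
  then have "(\<lambda>m. X m - (X m - b m)) \<longlonglongrightarrow> 0 - 0" by (intro tendsto_diff X0)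
  then have b0: "b \<longlonglongrightarrow> 0" by simp
  have ev2: "\<forall>\<^sub>F m in sequentially. b m \<in> U"
    using topological_tendstoD[OF b0 oU U0] .
  from eventually_conj[OF ev1 ev2] obtain N where N: "\<And>m. m \<ge> N \<Longrightarrow> b m \<noteq> 0 \<and> b m \<in> U"
    unfolding eventually_sequentially by blast
  define z where "z i = h (b (i + N))" for i
  have bN: "b (i + N) \<noteq> 0" "b (i + N) \<in> U" for i using N[of "i + N"] by auto
  have z_nz: "z i \<noteq> 0" for i
  proof
    assume "z i = 0"
    then have "K1 * norm (b (i + N)) \<le> 0" using L0[OF bN(2)[of i]] by (simp add: z_def)
    then show False using K(1) bN(1)[of i] by (simp add: mult_le_0_iff)
  qed
  have zB: "z i \<in> h ` (B \<inter> U) - {0}" for i using bB bN z_nz by (auto simp: z_def)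
  have z0: "z \<longlonglongrightarrow> 0"
  proof (rule Lim_null_comparison)
    show "\<forall>\<^sub>F i in sequentially. norm (z i) \<le> K2 * norm (b (i + N))"
      using L0 bN by (auto simp: z_def)
    have "(\<lambda>i. b (i + N)) \<longlonglongrightarrow> 0" using LIMSEQ_ignore_initial_segment[OF b0] .
    then show "(\<lambda>i. K2 * norm (b (i + N))) \<longlonglongrightarrow> 0"
      using tendsto_mult[OF tendsto_const[of K2] tendsto_norm] by fastforce
  qed
  have diff: "(\<lambda>i. Y (i + N) /\<^sub>R norm (Y (i + N)) - z i /\<^sub>R norm (z i)) \<longlonglongrightarrow> 0"
  proof (rule Lim_null_comparison)
    show "\<forall>\<^sub>F i in sequentially. norm (Y (i + N) /\<^sub>R norm (Y (i + N)) - z i /\<^sub>R norm (z i))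
       \<le> 2 * (K2 / K1) * (norm (X (i + N) - b (i + N)) / norm (X (i + N)))"
    proof (rule always_eventually, rule allI)
      fix i
      let ?x = "X (i + N)" and ?b = "b (i + N)"
      have Ynz: "Y (i + N) \<noteq> 0" using y_nz by (simp add: Y_def)
      have "norm (Y (i + N) /\<^sub>R norm (Y (i + N)) - z i /\<^sub>R norm (z i))
          \<le> 2 * (norm (Y (i + N) - z i) / norm (Y (i + N)))"
        by (rule dir_diff[OF Ynz z_nz])
      also have "norm (Y (i + N) - z i) \<le> K2 * norm (?x - ?b)"
        using L[OF XU bN(2)] hX by (simp add: z_def)
      also have "K1 * norm ?x \<le> norm (Y (i + N))" using L0[OF XU] hX by metis
      then have "K2 * norm (?x - ?b) / norm (Y (i + N)) \<le> K2 * norm (?x - ?b) / (K1 * norm ?x)"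
        using K X_nz[of "i+N"] Ynz by (intro divide_left_mono) auto
      then have "2 * (K2 * norm (?x - ?b) / norm (Y (i + N))) \<le> 2 * (K2 * norm (?x - ?b) / (K1 * norm ?x))"
        by (rule mult_left_mono) simp
      also have "2 * (K2 * norm (?x - ?b) / (K1 * norm ?x)) = 2 * (K2 / K1) * (norm (?x - ?b) / norm ?x)"
        by simp
      finally show "norm (Y (i + N) /\<^sub>R norm (Y (i + N)) - z i /\<^sub>R norm (z i))
       \<le> 2 * (K2 / K1) * (norm (?x - ?b) / norm ?x)"
        using Ynz by (simp add: divide_right_mono)
    qed
    show "(\<lambda>i. 2 * (K2 / K1) * (norm (X (i + N) - b (i + N)) / norm (X (i + N)))) \<longlonglongrightarrow> 0"
      using tendsto_mult[OF tendsto_const[of "2 * (K2 / K1)"] LIMSEQ_ignore_initial_segment[OF r1, of N]]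
      by simp
  qed
  have "(\<lambda>i. Y (i + N) /\<^sub>R norm (Y (i + N)) - (Y (i + N) /\<^sub>R norm (Y (i + N)) - z i /\<^sub>R norm (z i))) \<longlonglongrightarrow> d - 0"
    using tendsto_diff[OF LIMSEQ_ignore_initial_segment[OF Yd, of N] diff] .
  then have zd: "(\<lambda>i. z i /\<^sub>R norm (z i)) \<longlonglongrightarrow> d" by simp
  show "d \<in> direction_set (h ` (B \<inter> U))"
    unfolding direction_set_def using dS zB z0 zd by blast
qed

end
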